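(* Let $d\ge1$ and let $\mathcal{P}$ be a $d$-partition of $\mathbb{Z}^n$ that is invariant under the action of $\mathbb{Z}^n$. Then every block $S\in\mathcal{P}$ is either $d$-sparse or a non-trivial affine sublattice of $\mathbb{Z}^n$, i.e. $S=\mathbf v+L$ for some $\mathbf v\in\mathbb{Z}^n$ and some sublattice $L$ with $\{\mathbf 0\}\subsetneq L\subsetneq\mathbb{Z}^n$.
   Context: A $d$-partition of a set $E$ ($|E|\ge d+1$) is a collection $\mathcal P$ of subsets of $E$ (blocks) with $|\mathcal P|\ge2$, every block of size $\ge d$, and every $d$-element subset of $E$ contained in exactly one block. $\mathbb{Z}^n$ acts on subsets by $\mathbf u+S=\{\mathbf u+\mathbf v:\mathbf v\in S\}$ and on collections of subsets by $\mathbf u+\mathcal P=\{\mathbf u+S:S\in\mathcal P\}$; $\mathcal P$ is invariant if $\mathbf u+\mathcal P=\mathcal P$ for all $\mathbf u\in\mathbb{Z}^n$. A subset $S\subset\mathbb{Z}^n$ is $d$-sparse if there is no $\mathbf u\in\mathbb{Z}^n\setminus\{\mathbf 0\}$ with $|S\cap(\mathbf u+S)|\ge d$. *)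

theory Defs
  imports "HOL-Analysis.Analysis"
begin

text \<open>Z^n is rendered as \<open>int ^ 'n\<close> for a finite index type \<open>'n\<close>.\<close>

definition card_ge :: "'a set \<Rightarrow> nat \<Rightarrow> bool" where
  "card_ge A k \<longleftrightarrow> infinite A \<or> k \<le> card A"

definition d_partition :: "nat \<Rightarrow> 'a set \<Rightarrow> 'a set set \<Rightarrow> bool" where
  "d_partition d E P \<longleftrightarrow>
     card_ge E (d + 1) \<and>
     (\<forall>S\<in>P. S \<subseteq> E) \<and>
     (\<exists>A\<in>P. \<exists>B\<in>P. A \<noteq> B) \<and>
     (\<forall>S\<in>P. card_ge S d) \<and>
     (\<forall>T. T \<subseteq> E \<and> finite T \<and> card T = d \<longrightarrow> (\<exists>!S. S \<in> P \<and> T \<subseteq> S))"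

definition shift :: "'a::plus \<Rightarrow> 'a set \<Rightarrow> 'a set" where
  "shift u S = (\<lambda>v. u + v) ` S"

definition invariant_partition :: "('a::plus) set set \<Rightarrow> bool" where
  "invariant_partition P \<longleftrightarrow> (\<forall>u. shift u ` P = P)"

definition d_sparse :: "nat \<Rightarrow> ('a::{plus,zero}) set \<Rightarrow> bool" where
  "d_sparse d S \<longleftrightarrow> \<not> (\<exists>u. u \<noteq> 0 \<and> card_ge (S \<inter> shift u S) d)"

definition sublattice :: "('a::ab_group_add) set \<Rightarrow> bool" where
  "sublattice L \<longleftrightarrow> 0 \<in> L \<and> (\<forall>x\<in>L. \<forall>y\<in>L. x - y \<in> L)"

end

theory Submission
  imports Defs
begin

lemma card_ge_sub:
  assumes "card_ge X d"
  obtains T where "T \<subseteq> X" "finite T" "card T = d"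
proof (cases "finite X")
  case True
  then have "d \<le> card X" using assms by (simp add: card_ge_def)
  then obtain T where "T \<subseteq> X" "card T = d" "finite T" by (rule obtain_subset_with_card_n)
  then show ?thesis by (intro that)
next
  case False
  then obtain T where "finite T" "card T = d" "T \<subseteq> X"
    using infinite_arbitrarily_large[of X d] by auto
  then show ?thesis by (intro that)
qed

lemma part_eq:
  assumes "d_partition d (UNIV::'a set) P" "A \<in> P" "B \<in> P" "card_ge (A \<inter> B) d"
  shows "A = B"
proof -
  obtain T where T: "T \<subseteq> A \<inter> B" "finite T" "card T = d"
    using card_ge_sub[OF assms(4)] by metis
  have ex: "\<exists>!S. S \<in> P \<and> T \<subseteq> S" using assms(1) T(2,3) unfolding d_partition_def by simp
  have "A \<in> P \<and> T \<subseteq> A" "B \<in> P \<and> T \<subseteq> B" using T(1) assms(2,3) by auto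
  moreover obtain S0 where S0: "\<forall>y. y \<in> P \<and> T \<subseteq> y \<longrightarrow> y = S0"
    using ex unfolding Ex1_def by blast
  ultimately have "A = S0" "B = S0" by auto
  then show ?thesis by simp
qed

lemma shift_mem: "x \<in> shift u S \<longleftrightarrow> x - u \<in> (S::('b::ab_group_add) set)"
proof
  assume "x \<in> shift u S"
  then obtain y where "y \<in> S" "x = u + y" unfolding shift_def by blast
  then show "x - u \<in> S" by simp
next
  assume "x - u \<in> S"
  moreover have "x = u + (x - u)" by simp
  ultimately show "x \<in> shift u S" unfolding shift_def by blast
qed

lemma iter_mem:
  fixes S :: "(int ^ 'n) set"
  assumes "shift u S = S" "b \<in> S"
  shows "b + of_nat k *s u \<in> S"
proof (induction k)
  case 0
  then show ?case using assms(2) by simp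
next
  case (Suc k)
  have "b + of_nat (Suc k) *s u = (b + of_nat k *s u) + u"
    by (simp add: vec_eq_iff algebra_simps)
  also have "\<dots> \<in> shift u S" using Suc by (simp add: shift_mem)
  finally show ?case using assms(1) by simp
qed

lemma inf_line:
  fixes u b :: "int ^ 'n"
  assumes "u \<noteq> 0"
  shows "infinite (range (\<lambda>k::nat. b + of_nat k *s u))"
proof -
  obtain i where i: "u $ i \<noteq> 0" using assms by (metis vec_eq_iff zero_index)
  have "inj (\<lambda>k::nat. b + of_nat k *s u)"
  proof (rule injI)
    fix k m :: nat assume "b + of_nat k *s u = b + of_nat m *s u"
    then have "(b + of_nat k *s u) $ i = (b + of_nat m *s u) $ i" by simp
    then have "int k * u $ i = int m * u $ i" by simp
    then show "k = m" using i by simp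
  qed
  then show ?thesis using range_inj_infinite by blast
qed

theorem mainTheorem4:
  fixes d :: nat and P :: "(int ^ 'n) set set"
  assumes "d \<ge> 1"
    and "d_partition d (UNIV :: (int ^ 'n) set) P"
    and "invariant_partition P"
    and "S \<in> P"
  shows "d_sparse d S \<or>
         (\<exists>v L. sublattice L \<and> {0} \<subset> L \<and> L \<subset> UNIV \<and> S = shift v L)"
proof (cases "d_sparse d S")
  case True then show ?thesis by simp
next
  case False
  then obtain u where u: "u \<noteq> 0" "card_ge (S \<inter> shift u S) d"
    unfolding d_sparse_def by blast
  have inP: "shift w S \<in> P" for w
    using assms(3,4) unfolding invariant_partition_def by blast
  have su: "shift u S = S"
    using part_eq[OF assms(2) assms(4) inP u(2)] by simp
  have key: "shift (b - a) S = S" if "a \<in> S" "b \<in> S" for a b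
  proof -
    have sub: "range (\<lambda>k::nat. b + of_nat k *s u) \<subseteq> S \<inter> shift (b - a) S"
    proof
      fix x assume "x \<in> range (\<lambda>k::nat. b + of_nat k *s u)"
      then obtain k where x: "x = b + of_nat k *s u" by blast
      have "x \<in> S" using iter_mem[OF su that(2)] x by simp
      moreover have e: "x - (b - a) = a + of_nat k *s u" using x by (simp add: algebra_simps)
      have "x - (b - a) \<in> S" unfolding e by (rule iter_mem[OF su that(1)])
      then have "x \<in> shift (b - a) S" by (simp only: shift_mem)
      ultimately show "x \<in> S \<inter> shift (b - a) S" by blast
    qed
    have "infinite (S \<inter> shift (b - a) S)"
      using inf_line[OF u(1)] sub finite_subset by blast
    then have "card_ge (S \<inter> shift (b - a) S) d" by (simp add: card_ge_def)
    then show ?thesis by (rule sym[OF part_eq[OF assms(2) assms(4) inP]])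
  qed
  have "card_ge S d" using assms(2,4) unfolding d_partition_def by blast
  then obtain T where T: "T \<subseteq> S" "finite T" "card T = d" using card_ge_sub by blast
  then have "T \<noteq> {}" using assms(1) by auto
  then obtain s where s: "s \<in> S" using T by blast
  define L where "L = shift (-s) S"
  have Lm: "x \<in> L \<longleftrightarrow> s + x \<in> S" for x unfolding L_def shift_mem by (simp add: algebra_simps)
  have sl: "sublattice L" unfolding sublattice_def
  proof (intro conjI ballI)
    show "0 \<in> L" using s Lm by simp
    fix x y assume "x \<in> L" "y \<in> L"
    then have a: "s + y \<in> S" and b: "s + x \<in> S" using Lm by auto
    have "shift ((s + y) - (s + x)) S = S" using key[OF b a] .
    then have "s \<in> shift ((s + y) - (s + x)) S" using s by simp
    then have h: "s - ((s + y) - (s + x)) \<in> S" by (simp only: shift_mem)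
    have e2: "s - ((s + y) - (s + x)) = s + (x - y)" by (simp add: algebra_simps)
    have "s + (x - y) \<in> S" using h unfolding e2 .
    then show "x - y \<in> L" by (rule Lm[THEN iffD2])
  qed
  have "(s + u) - u \<in> S" using s by simp
  then have "s + u \<in> shift u S" by (simp only: shift_mem)
  then have "u \<in> L" using su Lm by simp
  then have c1: "{0} \<subset> L"
  proof -
    have "0 \<in> L" using s Lm by simp
    then show ?thesis using \<open>u \<in> L\<close> u(1) by (auto simp: psubset_eq)
  qed
  have c2: "L \<subset> UNIV"
  proof (rule ccontr)
    assume "\<not> L \<subset> UNIV"
    then have "L = UNIV" by (simp add: psubset_eq)
    have "x \<in> S" for x
    proof -
      have "x - s \<in> L" using \<open>L = UNIV\<close> by simp
      then have "s + (x - s) \<in> S" by (rule Lm[THEN iffD1])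
      then show ?thesis by simp
    qed
    then have SU: "S = UNIV" by blast
    have eqS: "A = S" if "A \<in> P" for A
    proof -
      have "card_ge A d" using assms(2) that unfolding d_partition_def by blast
      then have "card_ge (A \<inter> S) d" using SU by simp
      then show ?thesis by (rule part_eq[OF assms(2) that assms(4)])
    qed
    obtain A B where "A \<in> P" "B \<in> P" "A \<noteq> B" using assms(2) unfolding d_partition_def by blast
    then show False using eqS by blast
  qed
  have "S = shift s L"
  proof (rule set_eqI)
    fix x
    have "x \<in> shift s L \<longleftrightarrow> x - s \<in> L" by (rule shift_mem)
    also have "\<dots> \<longleftrightarrow> s + (x - s) \<in> S" by (rule Lm)
    finally show "x \<in> S \<longleftrightarrow> x \<in> shift s L" by simp
  qed
  then have eq: "S = shift s L" .
  show ?thesis by (rule disjI2, rule exI[of _ s], rule exI[of _ L], intro conjI sl c1 c2 eq)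
qed

end
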